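(* For every integer $n \ge 5$, $\gamma_R(P(n,2)) \le \left\lceil \frac{8n}{7}\right\rceil$.
   Context: For integers $n \ge 3$ and $1 \le k < n/2$, the generalized Petersen graph $P(n,k)$ has vertex set $\{v_i, u_i : 0 \le i \le n-1\}$ and edge set $\{v_iv_{i+1},\ v_iu_i,\ u_iu_{i+k} : 0 \le i \le n-1\}$, with subscripts taken modulo $n$. A Roman domination function (RDF) of a graph $G$ is a function $f: V(G)\to\{0,1,2\}$ such that every vertex $u$ with $f(u)=0$ is adjacent to at least one vertex $v$ with $f(v)=2$. Its weight is $\sum_{u\in V(G)} f(u)$. The Roman domination number $\gamma_R(G)$ is the minimum weight of an RDF of $G$. *)

theory Defs
  imports Complex_Main
begin

text \<open>Vertices of the generalized Petersen graph P(n,k): outer v_i and inner u_i,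
  with indices i < n.\<close>
datatype gpvert = Outer nat | Inner nat

definition gp_verts :: "nat \<Rightarrow> gpvert set" where
  "gp_verts n = Outer ` {..<n} \<union> Inner ` {..<n}"

definition gp_edges :: "nat \<Rightarrow> nat \<Rightarrow> (gpvert \<times> gpvert) set" where
  "gp_edges n k =
     (\<Union>i<n. {(Outer i, Outer ((i + 1) mod n)), (Outer i, Inner i),
              (Inner i, Inner ((i + k) mod n))})"

definition gp_adj :: "nat \<Rightarrow> nat \<Rightarrow> gpvert \<Rightarrow> gpvert \<Rightarrow> bool" where
  "gp_adj n k x y \<longleftrightarrow> (x, y) \<in> gp_edges n k \<or> (y, x) \<in> gp_edges n k"

definition is_RDF :: "'a set \<Rightarrow> ('a \<Rightarrow> 'a \<Rightarrow> bool) \<Rightarrow> ('a \<Rightarrow> nat) \<Rightarrow> bool" where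
  "is_RDF V E f \<longleftrightarrow> (\<forall>x\<in>V. f x \<le> 2) \<and>
     (\<forall>x\<in>V. f x = 0 \<longrightarrow> (\<exists>y\<in>V. E x y \<and> f y = 2))"

definition RDF_weight :: "'a set \<Rightarrow> ('a \<Rightarrow> nat) \<Rightarrow> nat" where
  "RDF_weight V f = (\<Sum>x\<in>V. f x)"

definition roman_domination_number :: "'a set \<Rightarrow> ('a \<Rightarrow> 'a \<Rightarrow> bool) \<Rightarrow> nat" where
  "roman_domination_number V E = (LEAST w. \<exists>f. is_RDF V E f \<and> RDF_weight V f = w)"

end

theory Submission
  imports Defs
begin

definition nx :: "nat \<Rightarrow> nat \<Rightarrow> nat \<Rightarrow> nat" where
  "nx n d i = (if i + d < n then i + d else i + d - n)"
definition pv :: "nat \<Rightarrow> nat \<Rightarrow> nat \<Rightarrow> nat" where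
  "pv n d i = (if d \<le> i then i - d else i + n - d)"

definition good :: "nat \<Rightarrow> (nat \<Rightarrow> nat) \<Rightarrow> (nat \<Rightarrow> nat) \<Rightarrow> bool" where
  "good n a b = (\<forall>i<n. a i \<le> 2 \<and> b i \<le> 2 \<and>
     (a i = 0 \<longrightarrow> a (nx n 1 i) = 2 \<or> a (pv n 1 i) = 2 \<or> b i = 2) \<and>
     (b i = 0 \<longrightarrow> b (nx n 2 i) = 2 \<or> b (pv n 2 i) = 2 \<or> a i = 2))"

lemma edge_adj: "(x, y) \<in> gp_edges n k \<Longrightarrow> gp_adj n k x y \<and> gp_adj n k y x"
  by (simp add: gp_adj_def)

lemma adjO_next: assumes "i < n" shows "gp_adj n k (Outer i) (Outer (nx n 1 i))"
proof -
  have "(Outer i, Outer ((i+1) mod n)) \<in> gp_edges n k" using assms unfolding gp_edges_def by blast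
  moreover have "(i+1) mod n = nx n 1 i" using assms by (auto simp: nx_def mod_if)
  ultimately show ?thesis using edge_adj by metis
qed

lemma adjO_prev: assumes "i < n" shows "gp_adj n k (Outer i) (Outer (pv n 1 i))"
proof -
  define j where "j = pv n 1 i"
  have j: "j < n" "(j+1) mod n = i" using assms by (auto simp: j_def pv_def)
  have "(Outer j, Outer ((j+1) mod n)) \<in> gp_edges n k" using j unfolding gp_edges_def by blast
  then show ?thesis using edge_adj j by (metis j_def)
qed

lemma adjOI: assumes "i < n" shows "gp_adj n k (Outer i) (Inner i)" "gp_adj n k (Inner i) (Outer i)"
proof -
  have "(Outer i, Inner i) \<in> gp_edges n k" using assms unfolding gp_edges_def by blast
  then show "gp_adj n k (Outer i) (Inner i)" "gp_adj n k (Inner i) (Outer i)" using edge_adj by metis+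
qed

lemma adjI_next: assumes "i < n" "n \<ge> 2" shows "gp_adj n 2 (Inner i) (Inner (nx n 2 i))"
proof -
  have "(Inner i, Inner ((i+2) mod n)) \<in> gp_edges n 2" using assms unfolding gp_edges_def by blast
  moreover have "(i+2) mod n = nx n 2 i" using assms by (auto simp: nx_def mod_if)
  ultimately show ?thesis using edge_adj by metis
qed

lemma adjI_prev: assumes "i < n" "n \<ge> 2" shows "gp_adj n 2 (Inner i) (Inner (pv n 2 i))"
proof -
  define j where "j = pv n 2 i"
  have j: "j < n" "(j+2) mod n = i" using assms by (auto simp: j_def pv_def mod_if)
  have "(Inner j, Inner ((j+2) mod n)) \<in> gp_edges n 2" using j unfolding gp_edges_def by blast
  then show ?thesis using edge_adj j by (metis j_def)
qed

lemma nx_lt: "i < n \<Longrightarrow> d \<le> 2 \<Longrightarrow> n \<ge> 2 \<Longrightarrow> nx n d i < n" by (auto simp: nx_def)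
lemma pv_lt: "i < n \<Longrightarrow> d \<le> 2 \<Longrightarrow> n \<ge> 2 \<Longrightarrow> pv n d i < n" by (auto simp: pv_def)

lemma good_RDF:
  assumes "n \<ge> 5" "good n a b"
  shows "is_RDF (gp_verts n) (gp_adj n 2) (\<lambda>v. case v of Outer i \<Rightarrow> a i | Inner i \<Rightarrow> b i)"
  unfolding is_RDF_def
proof (intro conjI ballI impI)
  fix x assume "x \<in> gp_verts n"
  then show "(case x of Outer i \<Rightarrow> a i | Inner i \<Rightarrow> b i) \<le> 2"
    using assms(2) by (auto simp: gp_verts_def good_def)
next
  fix x assume x: "x \<in> gp_verts n" and z: "(case x of Outer i \<Rightarrow> a i | Inner i \<Rightarrow> b i) = 0"
  have n2: "n \<ge> 2" using assms by simp
  have inV: "\<And>j. j < n \<Longrightarrow> Outer j \<in> gp_verts n \<and> Inner j \<in> gp_verts n" by (simp add: gp_verts_def)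
  from x obtain i where i: "i < n" "x = Outer i \<or> x = Inner i" by (auto simp: gp_verts_def)
  from i(2) show "\<exists>y\<in>gp_verts n. gp_adj n 2 x y \<and> (case y of Outer i \<Rightarrow> a i | Inner i \<Rightarrow> b i) = 2"
  proof
    assume xo: "x = Outer i"
    then have "a i = 0" using z by simp
    then have "a (nx n 1 i) = 2 \<or> a (pv n 1 i) = 2 \<or> b i = 2" using assms(2) i(1) by (auto simp: good_def)
    then show ?thesis
      using xo adjO_next[OF i(1)] adjO_prev[OF i(1)] adjOI[OF i(1)] inV nx_lt[OF i(1) _ n2] pv_lt[OF i(1) _ n2] i(1)
      by (metis gpvert.simps(5) gpvert.simps(6) le_add2 one_add_one)
  next
    assume xo: "x = Inner i"
    then have "b i = 0" using z by simp
    then have "b (nx n 2 i) = 2 \<or> b (pv n 2 i) = 2 \<or> a i = 2" using assms(2) i(1) by (auto simp: good_def)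
    then show ?thesis
      using xo adjI_next[OF i(1) n2] adjI_prev[OF i(1) n2] adjOI[OF i(1)] inV nx_lt[OF i(1) _ n2] pv_lt[OF i(1) _ n2] i(1)
      by (metis gpvert.simps(5) gpvert.simps(6) order_refl)
  qed
qed

definition F :: "nat list \<Rightarrow> nat list \<Rightarrow> nat \<Rightarrow> nat \<Rightarrow> nat" where
  "F P T m i = (if i < 7*m then P ! (i mod 7) else T ! (i - 7*m))"

definition pgood :: "nat list \<Rightarrow> nat list \<Rightarrow> bool" where
  "pgood Po Pi = (\<forall>s<7. Po!s \<le> 2 \<and> Pi!s \<le> 2 \<and>
     (Po!s = 0 \<longrightarrow> Po!((s+1) mod 7) = 2 \<or> Po!((s+6) mod 7) = 2 \<or> Pi!s = 2) \<and>
     (Pi!s = 0 \<longrightarrow> Pi!((s+2) mod 7) = 2 \<or> Pi!((s+5) mod 7) = 2 \<or> Po!s = 2))"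

lemma Fshift:
  assumes "m \<ge> 1" "7*m \<le> x + 7"
  shows "F P T m x = F P T 1 (x + 7 - 7*m)"
proof (cases "x < 7*m")
  case True
  define y where "y = x + 7 - 7*m"
  have y: "y < 7" "x = 7*(m-1) + y" using True assms unfolding y_def by linarith+
  have "x mod 7 = (y + 7*(m-1)) mod 7" using y(2) by (simp add: add.commute)
  also have "\<dots> = y" using y(1) by simp
  finally have "x mod 7 = y" .
  moreover have "x + 7 - 7*m < 7*1" using y(1) unfolding y_def by simp
  ultimately show ?thesis using True unfolding F_def y_def by simp
next
  case False
  then have "\<not> x + 7 - 7*m < 7*1" "x + 7 - 7*m - 7*1 = x - 7*m" by linarith+
  then show ?thesis using False unfolding F_def by presburger
qed

lemma Fsmall: "m \<ge> 1 \<Longrightarrow> x < 7 \<Longrightarrow> F P T m x = F P T 1 x"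
  by (simp add: F_def)


lemma vals:
  assumes m: "m \<ge> 1" and L: "L \<ge> 2" and n: "n = 7*m + L" and i: "i < n"
    and nA: "\<not> (2 \<le> i \<and> i + 2 < 7*m)" and d: "d \<le> 2"
    and i': "i' = (if i < 2 then i else i + 7 - 7*m)"
  shows "F P T m i = F P T 1 i'"
    "F P T m (nx n d i) = F P T 1 (nx (7+L) d i')"
    "F P T m (pv n d i) = F P T 1 (pv (7+L) d i')"
proof -
  show "F P T m i = F P T 1 i'"
  proof (cases "i < 2")
    case True then show ?thesis using i' Fsmall[OF m] by simp
  next
    case False then show ?thesis using i' Fshift[OF m] nA by simp
  qed
  show "F P T m (nx n d i) = F P T 1 (nx (7+L) d i')"
  proof (cases "i < 2")
    case True
    then have "nx n d i = i + d" "nx (7+L) d i' = i + d" using i' n d m by (auto simp: nx_def)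
    then show ?thesis using Fsmall[OF m] True d by simp
  next
    case False
    show ?thesis
    proof (cases "i + d < n")
      case True
      then have "nx n d i = i + d" "nx (7+L) d i' = i + d + 7 - 7*m" using i' n d m False nA by (auto simp: nx_def)
      then show ?thesis using Fshift[OF m, of "i+d"] False nA by simp
    next
      case c2: False
      then have "nx n d i = i + d - n" "nx (7+L) d i' = i + d - n" using i' n d m False nA by (auto simp: nx_def)
      then show ?thesis using Fsmall[OF m, of "i+d-n"] c2 d i by simp
    qed
  qed
  show "F P T m (pv n d i) = F P T 1 (pv (7+L) d i')"
  proof (cases "i < 2")
    case True
    show ?thesis
    proof (cases "d \<le> i")
      case True
      then have "pv n d i = i - d" "pv (7+L) d i' = i - d" using i' \<open>i<2\<close> by (auto simp: pv_def)
      then show ?thesis using Fsmall[OF m] \<open>i<2\<close> by simp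
    next
      case False
      then have "pv n d i = i + n - d" "pv (7+L) d i' = i + n - d + 7 - 7*m" using i' \<open>i<2\<close> n L d by (auto simp: pv_def)
      then show ?thesis using Fshift[OF m, of "i+n-d"] n L d by simp
    qed
  next
    case False
    then have "pv n d i = i - d" "pv (7+L) d i' = i - d + 7 - 7*m" using i' n d m nA by (auto simp: pv_def)
    then show ?thesis using Fshift[OF m, of "i-d"] False nA d by simp
  qed
qed

lemma mod7_facts:
  fixes i :: nat
  shows "(i+1) mod 7 = (i mod 7 + 1) mod 7" "(i+2) mod 7 = (i mod 7 + 2) mod 7"
    "i \<ge> 1 \<Longrightarrow> (i-1) mod 7 = (i mod 7 + 6) mod 7"
    "i \<ge> 2 \<Longrightarrow> (i-2) mod 7 = (i mod 7 + 5) mod 7"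
proof -
  show "(i+1) mod 7 = (i mod 7 + 1) mod 7" "(i+2) mod 7 = (i mod 7 + 2) mod 7"
    by (rule mod_add_left_eq[symmetric])+
  show "i \<ge> 1 \<Longrightarrow> (i-1) mod 7 = (i mod 7 + 6) mod 7"
  proof -
    assume "i \<ge> 1"
    have "(i-1) mod 7 = (i - 1 + 7) mod 7" by (rule mod_add_self2[symmetric])
    also have "i - 1 + 7 = i + 6" using \<open>i \<ge> 1\<close> by simp
    finally show ?thesis by (simp only: mod_add_left_eq)
  qed
  show "i \<ge> 2 \<Longrightarrow> (i-2) mod 7 = (i mod 7 + 5) mod 7"
  proof -
    assume "i \<ge> 2"
    have "(i-2) mod 7 = (i - 2 + 7) mod 7" by (rule mod_add_self2[symmetric])
    also have "i - 2 + 7 = i + 5" using \<open>i \<ge> 2\<close> by simp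
    finally show ?thesis by (simp only: mod_add_left_eq)
  qed
qed

lemma reduce:
  assumes m: "m \<ge> 1" and L: "L \<ge> 2" and HP: "pgood Po Pi"
    and H1: "good (7+L) (F Po To 1) (F Pi Ti 1)"
  shows "good (7*m+L) (F Po To m) (F Pi Ti m)"
  unfolding good_def
proof (intro allI impI)
  fix i assume i: "i < 7*m+L"
  define n where "n = 7*m+L"
  have i': "i < n" using i n_def by simp
  let ?a = "F Po To m" and ?b = "F Pi Ti m"
  have goal: "?a i \<le> 2 \<and> ?b i \<le> 2 \<and>
     (?a i = 0 \<longrightarrow> ?a (nx n 1 i) = 2 \<or> ?a (pv n 1 i) = 2 \<or> ?b i = 2) \<and>
     (?b i = 0 \<longrightarrow> ?b (nx n 2 i) = 2 \<or> ?b (pv n 2 i) = 2 \<or> ?a i = 2)"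
  proof (cases "2 \<le> i \<and> i + 2 < 7*m")
    case True
    define s where "s = i mod 7"
    have s7: "s < 7" by (simp add: s_def)
    have nxpv: "nx n 1 i = i + 1" "nx n 2 i = i + 2" "pv n 1 i = i - 1" "pv n 2 i = i - 2"
      using True n_def by (auto simp: nx_def pv_def)
    have ev: "F P T m i = P!s" "F P T m (i+1) = P!((s+1) mod 7)" "F P T m (i+2) = P!((s+2) mod 7)"
      "F P T m (i-1) = P!((s+6) mod 7)" "F P T m (i-2) = P!((s+5) mod 7)" for P T
    proof -
      have lt: "i < 7*m" "i+1 < 7*m" "i+2 < 7*m" "i-1 < 7*m" "i-2 < 7*m" using True by linarith+
      show "F P T m i = P!s" "F P T m (i+1) = P!((s+1) mod 7)" "F P T m (i+2) = P!((s+2) mod 7)"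
        "F P T m (i-1) = P!((s+6) mod 7)" "F P T m (i-2) = P!((s+5) mod 7)"
      proof -
        have "1 \<le> i" "2 \<le> i" using True by auto
        note mf = mod7_facts(1,2)[of i] mod7_facts(3)[OF this(1)] mod7_facts(4)[OF this(2)]
        show "F P T m i = P!s" "F P T m (i+1) = P!((s+1) mod 7)" "F P T m (i+2) = P!((s+2) mod 7)"
          "F P T m (i-1) = P!((s+6) mod 7)" "F P T m (i-2) = P!((s+5) mod 7)"
          unfolding s_def F_def using lt by (simp_all only: if_True mf)
      qed
    qed
    show ?thesis using HP s7 unfolding pgood_def nxpv ev by blast
  next
    case False
    define j where "j = (if i < 2 then i else i + 7 - 7*m)"
    have j: "j < 7 + L" using i False unfolding j_def by auto
    have V: "F P T m i = F P T 1 j"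
      "F P T m (nx n d i) = F P T 1 (nx (7+L) d j)"
      "F P T m (pv n d i) = F P T 1 (pv (7+L) d j)" if "d \<le> 2" for P T d
      using vals[OF m L n_def i' False that j_def] by blast+
    show ?thesis using H1 j unfolding good_def V[OF order_refl] V[OF one_le_numeral] by blast
  qed
  then show "?a i \<le> 2 \<and> ?b i \<le> 2 \<and>
     (?a i = 0 \<longrightarrow> ?a (nx (7*m+L) 1 i) = 2 \<or> ?a (pv (7*m+L) 1 i) = 2 \<or> ?b i = 2) \<and>
     (?b i = 0 \<longrightarrow> ?b (nx (7*m+L) 2 i) = 2 \<or> ?b (pv (7*m+L) 2 i) = 2 \<or> ?a i = 2)"
    unfolding n_def .
qed

lemma good_list: "good n a b = list_all (\<lambda>i. a i \<le> 2 \<and> b i \<le> 2 \<and>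
     (a i = 0 \<longrightarrow> a (nx n 1 i) = 2 \<or> a (pv n 1 i) = 2 \<or> b i = 2) \<and>
     (b i = 0 \<longrightarrow> b (nx n 2 i) = 2 \<or> b (pv n 2 i) = 2 \<or> a i = 2)) [0..<n]"
  unfolding good_def list_all_iff set_upt atLeast0LessThan lessThan_iff by blast

definition "Po = [2,0,1,0,0,1,0::nat]"
definition "Pi = [0,0,0,2,2,0,0::nat]"

lemma pgood_P: "pgood Po Pi"
  unfolding pgood_def Po_def Pi_def by code_simp

lemma sum_period: "(\<Sum>i<7*m. P!(i mod 7)) = m * (\<Sum>s<7. P!s)"
proof -
  have "(\<Sum>i<7*m. P!(i mod 7)) = (\<Sum>q<m. \<Sum>i\<in>{q*7..<q*7+7}. P!(i mod 7))"
    using sum.nat_group[of "\<lambda>i. P!(i mod 7)" 7 m] by (simp add: mult.commute)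
  also have "\<dots> = (\<Sum>q<m. \<Sum>s<7. P!s)"
  proof (rule sum.cong[OF refl])
    fix q
    have "(\<Sum>i\<in>{q*7..<q*7+7}. P!(i mod 7)) = (\<Sum>j\<in>{0..<7}. P!((j + q*7) mod 7))"
      using sum.shift_bounds_nat_ivl[of "\<lambda>i. P!(i mod 7)" 0 "q*7" 7] by (simp add: add.commute)
    also have "\<dots> = (\<Sum>j\<in>{0..<7}. P!j)"
      by (rule sum.cong[OF refl]) simp
    finally show "(\<Sum>i\<in>{q*7..<q*7+7}. P!(i mod 7)) = (\<Sum>s<7. P!s)" by (metis add.commute atLeast0LessThan)
  qed
  also have "\<dots> = m * (\<Sum>s<7. P!s)" by simp
  finally show ?thesis .
qed

lemma sum_F: "(\<Sum>i<7*m+L. F P T m i) = m * (\<Sum>s<7. P!s) + (\<Sum>j<L. T!j)"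
proof -
  have "(\<Sum>i<7*m+L. F P T m i) = (\<Sum>i\<in>{0..<7*m}. F P T m i) + (\<Sum>i\<in>{7*m..<7*m+L}. F P T m i)"
    by (simp add: atLeast0LessThan[symmetric] sum.atLeastLessThan_concat)
  also have "(\<Sum>i\<in>{0..<7*m}. F P T m i) = (\<Sum>i<7*m. P!(i mod 7))"
    by (rule sum.cong) (auto simp: F_def)
  also have "(\<Sum>i\<in>{7*m..<7*m+L}. F P T m i) = (\<Sum>j\<in>{0..<L}. F P T m (j + 7*m))"
    using sum.shift_bounds_nat_ivl[of "F P T m" 0 "7*m" L] by (simp add: add.commute)
  also have "\<dots> = (\<Sum>j<L. T!j)"
    by (simp add: F_def atLeast0LessThan)
  finally show ?thesis using sum_period by simp
qed

lemma weight_eq: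
  "RDF_weight (gp_verts n) (\<lambda>v. case v of Outer i \<Rightarrow> a i | Inner i \<Rightarrow> b i) = (\<Sum>i<n. a i) + (\<Sum>i<n. b i)"
proof -
  have d: "Outer ` {..<n} \<inter> Inner ` {..<n} = {}" by auto
  have "RDF_weight (gp_verts n) (\<lambda>v. case v of Outer i \<Rightarrow> a i | Inner i \<Rightarrow> b i)
    = (\<Sum>v\<in>Outer ` {..<n}. case v of Outer i \<Rightarrow> a i | Inner i \<Rightarrow> b i)
      + (\<Sum>v\<in>Inner ` {..<n}. case v of Outer i \<Rightarrow> a i | Inner i \<Rightarrow> b i)"
    unfolding RDF_weight_def gp_verts_def by (rule sum.union_disjoint) (use d in auto)
  also have "\<dots> = (\<Sum>i<n. a i) + (\<Sum>i<n. b i)"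
    by (simp add: sum.reindex inj_on_def)
  finally show ?thesis .
qed

lemma rdn_le:
  assumes "n \<ge> 5" "good n a b"
  shows "roman_domination_number (gp_verts n) (gp_adj n 2) \<le> (\<Sum>i<n. a i) + (\<Sum>i<n. b i)"
  unfolding roman_domination_number_def
  by (rule Least_le) (use good_RDF[OF assms] weight_eq in blast)

lemma sumP: "(\<Sum>s<7. Po!s) + (\<Sum>s<7. Pi!s) = 8"
  by (simp add: Po_def Pi_def numeral_eq_Suc)

lemma caseT:
  assumes len: "length To = L" "length Ti = L" and L2: "L \<ge> 2"
    and bud: "7 * (sum_list To + sum_list Ti) < 8 * L + 7"
    and G1: "good (7+L) (F Po To 1) (F Pi Ti 1)"
    and G0: "L \<ge> 5 \<longrightarrow> good L (F Po To 0) (F Pi Ti 0)"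
    and n: "n = 7*m + L" "n \<ge> 5"
  shows "int (roman_domination_number (gp_verts n) (gp_adj n 2)) \<le> \<lceil>8 * real n / 7\<rceil>"
proof -
  have G: "good n (F Po To m) (F Pi Ti m)"
  proof (cases "m = 0")
    case True then show ?thesis using G0 n by simp
  next
    case False then show ?thesis using reduce[OF _ L2 pgood_P G1] n by simp
  qed
  have h: "m*(\<Sum>s<7. Po!s) + m*(\<Sum>s<7. Pi!s) = 8*m"
    using sumP by (metis add_mult_distrib2 mult.commute)
  have w: "(\<Sum>i<n. F Po To m i) + (\<Sum>i<n. F Pi Ti m i) = 8*m + (sum_list To + sum_list Ti)"
    using sum_F[where m=m and L=L and P=Po and T=To] sum_F[where m=m and L=L and P=Pi and T=Ti] h len n
    by (simp add: sum_list_sum_nth atLeast0LessThan)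
  have "roman_domination_number (gp_verts n) (gp_adj n 2) \<le> 8*m + (sum_list To + sum_list Ti)"
    using rdn_le[OF n(2) G] w by simp
  then have "int (roman_domination_number (gp_verts n) (gp_adj n 2)) \<le> int (8*m + (sum_list To + sum_list Ti))"
    by linarith
  also have "\<dots> \<le> \<lceil>8 * real n / 7\<rceil>"
  proof -
    have "real (7 * (sum_list To + sum_list Ti)) < real (8 * L + 7)" using bud by linarith
    then have "real (8*m + (sum_list To + sum_list Ti)) - 1 < 8 * real n / 7"
      using n(1) by (simp add: field_simps)
    then show ?thesis by (simp add: le_ceiling_iff)
  qed
  finally show ?thesis .
qed

theorem lemma2p1:
  fixes n :: nat
  assumes "n \<ge> 5"
  shows "int (roman_domination_number (gp_verts n) (gp_adj n 2)) \<le> \<lceil>8 * real n / 7\<rceil>"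
proof -
  define q where "q = n div 7"
  define r where "r = n mod 7"
  have nq: "n = 7*q + r" "r < 7" unfolding q_def r_def by simp_all
  have "r = 0 \<or> r = 1 \<or> r = 2 \<or> r = 3 \<or> r = 4 \<or> r = 5 \<or> r = 6" using nq(2) by linarith
  then show ?thesis
  proof (elim disjE)
    assume "r = 0"
    then have e: "n = 7*(q-1) + 7" using nq assms by simp
    show ?thesis
      apply (rule caseT[where To="Po" and L=7 and Ti="Pi", OF _ _ _ _ _ _ e assms])
      apply (unfold good_list Po_def Pi_def)
      apply code_simp+
      done
  next
    assume "r = 1"
    then have e: "n = 7*(q-1) + 8" using nq assms by simp
    show ?thesis
      apply (rule caseT[where To="Po @ [2]" and L=8 and Ti="Pi @ [0]", OF _ _ _ _ _ _ e assms])
      apply (unfold good_list Po_def Pi_def)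
      apply code_simp+
      done
  next
    assume "r = 2"
    then have e: "n = 7*q + 2" using nq assms by simp
    show ?thesis
      apply (rule caseT[where To="[2,0]" and L=2 and Ti="[0,1]", OF _ _ _ _ _ _ e assms])
      apply (unfold good_list Po_def Pi_def)
      apply code_simp+
      done
  next
    assume "r = 3"
    then have e: "n = 7*q + 3" using nq assms by simp
    show ?thesis
      apply (rule caseT[where To="[2,0,0]" and L=3 and Ti="[0,1,1]", OF _ _ _ _ _ _ e assms])
      apply (unfold good_list Po_def Pi_def)
      apply code_simp+
      done
  next
    assume "r = 4"
    then have e: "n = 7*(q-1) + 11" using nq assms by simp
    show ?thesis
      apply (rule caseT[where To="[2,0,0,0,0,2,0,0,0,1,0]" and L=11 and Ti="[0,0,2,2,0,0,0,2,2,0,0]", OF _ _ _ _ _ _ e assms])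
      apply (unfold good_list Po_def Pi_def)
      apply code_simp+
      done
  next
    assume "r = 5"
    then have e: "n = 7*q + 5" using nq assms by simp
    show ?thesis
      apply (rule caseT[where To="[2,0,0,0,0]" and L=5 and Ti="[0,0,2,2,0]", OF _ _ _ _ _ _ e assms])
      apply (unfold good_list Po_def Pi_def)
      apply code_simp+
      done
  next
    assume "r = 6"
    then have e: "n = 7*q + 6" using nq assms by simp
    show ?thesis
      apply (rule caseT[where To="[2,0,0,0,1,0]" and L=6 and Ti="[0,0,2,2,0,0]", OF _ _ _ _ _ _ e assms])
      apply (unfold good_list Po_def Pi_def)
      apply code_simp+
      done
  qed
qed

end
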